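(* Let $\bar n\ge 1$ be an integer and let $\theta_2>0$ satisfy $\theta_2\neq k\pi/\sqrt{n}$ for all $n\in\{1,\dots,4\bar n+3\}$ and all $k\in\mathbb{N}$. Let $\Phi$ be the Kraus map $\Phi(\rho)=M_g\rho M_g^\dagger+M_e\rho M_e^\dagger+M_m\rho M_m^\dagger$ with $M_g,M_e,M_m$ as defined in the context. Then the finite-dimensional subspace $\mathcal{H}_0^{4\bar n+3}$ is invariant under $M_g,M_e,M_m$, and for every density operator $\rho_0$ (positive semidefinite, unit trace) with support in $\mathcal{H}_0^{4\bar n+3}$, the sequence $\rho_{k+1}=\Phi(\rho_k)$ converges to $|\bar n\rangle\langle\bar n|$. Moreover, $V(\rho)=\mathrm{trace}(f(\mathbf{N})\rho)$, with $f$ defined in the context, is a strict Lyapunov function on density operators supported in $\mathcal{H}_0^{4\bar n+3}$: $V(\Phi(\rho))<V(\rho)$ for every such $\rho\neq|\bar n\rangle\langle\bar n|$.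
   Context: Let $\mathcal{H}$ be the Hilbert space with orthonormal (Fock) basis $\{|n\rangle\}_{n\in\mathbb{N}}$ ($\mathbb{N}$ includes $0$). Let $\mathbf{a}=\sum_{n\ge1}\sqrt{n}\,|n-1\rangle\langle n|$ (annihilation operator), $\mathbf{a}^\dagger$ its adjoint, $\mathbf{N}=\mathbf{a}^\dagger\mathbf{a}=\sum_n n|n\rangle\langle n|$, $\mathbf{I}$ the identity, and for a function $h:\mathbb{N}\to\mathbb{C}$ write $h(\mathbf{N})=\sum_n h(n)|n\rangle\langle n|$. Let $\mathcal{H}_{n_1}^{n_2}=\mathrm{span}\{|n_1\rangle,\dots,|n_2\rangle\}$. Fix $\theta_1=\pi/\sqrt{\bar n+1}$, a parameter $\theta_2>0$ and an arbitrary real phase $\varphi$. Define $M_g=\mathbf{a}^\dagger\,\big(1+\cos\tfrac{\theta_2\sqrt{\mathbf{N}}}{2}\big)\,\frac{\sin(\theta_1\sqrt{\mathbf{N}+\mathbf{I}})}{2\sqrt{\mathbf{N}+\mathbf{I}}}$, $M_e=\cos^2\tfrac{\theta_1\sqrt{\mathbf{N}+\mathbf{I}}}{2}\,\cos\tfrac{\theta_2\sqrt{\mathbf{N}}}{2}-\sin^2\tfrac{\theta_1\sqrt{\mathbf{N}+\mathbf{I}}}{2}$, $M_m=e^{i\varphi}\,\mathbf{a}\,\frac{\sin(\theta_2\sqrt{\mathbf{N}}/2)}{\sqrt{\mathbf{N}}}\,\cos\tfrac{\theta_1\sqrt{\mathbf{N}+\mathbf{I}}}{2}$ (the value of $\sin(\theta_2\sqrt{n}/2)/\sqrt{n}$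 at $n=0$ is irrelevant since it is followed by $\mathbf{a}$). Set $\alpha_n=\pi\sqrt{(n+1)/(\bar n+1)}$ and $\beta_n=\theta_2\sqrt{n}/2$. Fix $\eta\in(0,1)$ and define $f:\mathbb{N}\to\mathbb{R}$ by $f(\bar n)=0$, $f(\bar n+1)=f(\bar n-1)=1$, $f(n-1)=f(n)+\eta\sin^2\tfrac{\alpha_n}{2}\cos^2\tfrac{\beta_n}{2}\,(f(n)-f(n+1))$ for $0<n<\bar n$ (recursively downward), $f(n+1)=f(n)+\eta\sin^2\tfrac{\beta_n}{2}\,(f(n)-f(n-1))$ for $\bar n<n<4\bar n+3$, and $f(n)=f(4\bar n+3)$ for $n>4\bar n+3$. *)

theory Defs
  imports "HOL-Analysis.Analysis"
begin

text \<open>Operators on the Fock space are represented by their (infinite) matrices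
  in the Fock basis: A i j = <i|A|j>.\<close>
type_synonym fmat = "nat \<Rightarrow> nat \<Rightarrow> complex"

definition mmul :: "fmat \<Rightarrow> fmat \<Rightarrow> fmat" where
  "mmul A B = (\<lambda>i j. infsum (\<lambda>k. A i k * B k j) UNIV)"

definition madd :: "fmat \<Rightarrow> fmat \<Rightarrow> fmat" where
  "madd A B = (\<lambda>i j. A i j + B i j)"

definition smul :: "complex \<Rightarrow> fmat \<Rightarrow> fmat" where
  "smul c A = (\<lambda>i j. c * A i j)"

definition adj :: "fmat \<Rightarrow> fmat" where
  "adj A = (\<lambda>i j. cnj (A j i))"

definition mtrace :: "fmat \<Rightarrow> complex" where
  "mtrace A = infsum (\<lambda>n. A n n) UNIV"

definition fN :: "(nat \<Rightarrow> complex) \<Rightarrow> fmat" where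
  "fN h = (\<lambda>i j. if i = j then h i else 0)"

definition ann :: fmat where
  "ann = (\<lambda>i j. if j = Suc i then complex_of_real (sqrt (real j)) else 0)"

definition cre :: fmat where
  "cre = adj ann"

definition ketbra :: "nat \<Rightarrow> fmat" where
  "ketbra n = (\<lambda>i j. if i = n \<and> j = n then 1 else 0)"

definition theta1 :: "nat \<Rightarrow> real" where
  "theta1 nbar = pi / sqrt (real nbar + 1)"

definition Mg :: "nat \<Rightarrow> real \<Rightarrow> fmat" where
  "Mg nbar th2 = mmul cre (fN (\<lambda>n. complex_of_real
      ((1 + cos (th2 * sqrt (real n) / 2)) *
       (sin (theta1 nbar * sqrt (real n + 1)) / (2 * sqrt (real n + 1))))))"

definition Me :: "nat \<Rightarrow> real \<Rightarrow> fmat" where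
  "Me nbar th2 = fN (\<lambda>n. complex_of_real
      ((cos (theta1 nbar * sqrt (real n + 1) / 2))\<^sup>2 * cos (th2 * sqrt (real n) / 2)
       - (sin (theta1 nbar * sqrt (real n + 1) / 2))\<^sup>2))"

definition Mm :: "nat \<Rightarrow> real \<Rightarrow> real \<Rightarrow> fmat" where
  "Mm nbar th2 \<phi> = smul (exp (\<i> * complex_of_real \<phi>))
      (mmul ann (fN (\<lambda>n. complex_of_real
         ((sin (th2 * sqrt (real n) / 2) / sqrt (real n)) *
          cos (theta1 nbar * sqrt (real n + 1) / 2)))))"

definition Kraus :: "nat \<Rightarrow> real \<Rightarrow> real \<Rightarrow> fmat \<Rightarrow> fmat" where
  "Kraus nbar th2 \<phi> \<rho> =
     madd (mmul (mmul (Mg nbar th2) \<rho>) (adj (Mg nbar th2)))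
      (madd (mmul (mmul (Me nbar th2) \<rho>) (adj (Me nbar th2)))
            (mmul (mmul (Mm nbar th2 \<phi>) \<rho>) (adj (Mm nbar th2 \<phi>))))"

definition density_on :: "nat \<Rightarrow> fmat \<Rightarrow> bool" where
  "density_on D \<rho> \<longleftrightarrow>
     (\<forall>i j. (D < i \<or> D < j) \<longrightarrow> \<rho> i j = 0) \<and>
     (\<forall>i j. \<rho> j i = cnj (\<rho> i j)) \<and>
     (\<forall>v :: nat \<Rightarrow> complex. 0 \<le> Re (\<Sum>i\<le>D. \<Sum>j\<le>D. cnj (v i) * \<rho> i j * v j)) \<and>
     mtrace \<rho> = 1"

definition invariant_on :: "nat \<Rightarrow> fmat \<Rightarrow> bool" where
  "invariant_on D M \<longleftrightarrow> (\<forall>i j. j \<le> D \<and> D < i \<longrightarrow> M i j = 0)"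

text \<open>V(rho) = trace (f(N) rho) (real for Hermitian rho).\<close>
definition Lyap :: "(nat \<Rightarrow> real) \<Rightarrow> fmat \<Rightarrow> real" where
  "Lyap f \<rho> = Re (mtrace (mmul (fN (\<lambda>n. complex_of_real (f n))) \<rho>))"

definition alpha_n :: "nat \<Rightarrow> nat \<Rightarrow> real" where
  "alpha_n nbar n = pi * sqrt ((real n + 1) / (real nbar + 1))"

definition beta_n :: "real \<Rightarrow> nat \<Rightarrow> real" where
  "beta_n th2 n = th2 * sqrt (real n) / 2"

text \<open>The defining equations of f (they determine f uniquely).\<close>
definition is_f :: "nat \<Rightarrow> real \<Rightarrow> real \<Rightarrow> (nat \<Rightarrow> real) \<Rightarrow> bool" where
  "is_f nbar th2 \<eta> f \<longleftrightarrow>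
     f nbar = 0 \<and> f (nbar + 1) = 1 \<and> f (nbar - 1) = 1 \<and>
     (\<forall>n. 0 < n \<and> n < nbar \<longrightarrow>
        f (n - 1) = f n + \<eta> * (sin (alpha_n nbar n / 2))\<^sup>2 * (cos (beta_n th2 n / 2))\<^sup>2
                         * (f n - f (n + 1))) \<and>
     (\<forall>n. nbar < n \<and> n < 4 * nbar + 3 \<longrightarrow>
        f (n + 1) = f n + \<eta> * (sin (beta_n th2 n / 2))\<^sup>2 * (f n - f (n - 1))) \<and>
     (\<forall>n. 4 * nbar + 3 < n \<longrightarrow> f n = f (4 * nbar + 3))"

end

theory Submission
  imports Defs
begin


lemma infsum_single_pt:
  fixes g :: "nat \<Rightarrow> complex"
  assumes "\<And>k. k \<noteq> a \<Longrightarrow> g k = 0"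
  shows "infsum g UNIV = g a"
proof -
  have "infsum g UNIV = infsum g {a}"
    by (rule infsum_cong_neutral) (use assms in auto)
  thus ?thesis by simp
qed

lemma mmul_fN_right: "mmul A (fN h) i j = A i j * h j"
  unfolding mmul_def fN_def by (subst infsum_single_pt[where a=j]) auto

lemma mmul_fN_left: "mmul (fN h) B i j = h i * B i j"
  unfolding mmul_def fN_def by (subst infsum_single_pt[where a=i]) auto

lemma mmul_up:
  assumes "\<And>i l. U i l = (if i = Suc l then u l else 0)"
  shows "mmul U B i k = (if i = 0 then 0 else u (i-1) * B (i-1) k)"
  unfolding mmul_def assms by (subst infsum_single_pt[where a="i-1"]) auto

lemma mmul_adj_up:
  assumes "\<And>i l. U i l = (if i = Suc l then u l else 0)"
  shows "mmul B (adj U) i j = (if j = 0 then 0 else B i (j-1) * cnj (u (j-1)))"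
  unfolding mmul_def adj_def assms by (subst infsum_single_pt[where a="j-1"]) auto

lemma mmul_down:
  assumes "\<And>i l. W i l = (if l = Suc i then w i else 0)"
  shows "mmul W B i k = w i * B (Suc i) k"
  unfolding mmul_def assms by (subst infsum_single_pt[where a="Suc i"]) auto

lemma mmul_adj_down:
  assumes "\<And>i l. W i l = (if l = Suc i then w i else 0)"
  shows "mmul B (adj W) i j = B i (Suc j) * cnj (w j)"
  unfolding mmul_def adj_def assms by (subst infsum_single_pt[where a="Suc j"]) auto

lemma mmul_adj_fN: "mmul B (adj (fN h)) i j = B i j * cnj (h j)"
  unfolding mmul_def adj_def fN_def by (subst infsum_single_pt[where a=j]) auto


definition Gc :: "nat \<Rightarrow> real \<Rightarrow> nat \<Rightarrow> real" where
  "Gc nbar th2 n = sqrt (real n + 1) * ((1 + cos (th2 * sqrt (real n) / 2)) *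
       (sin (theta1 nbar * sqrt (real n + 1)) / (2 * sqrt (real n + 1))))"
definition Ec :: "nat \<Rightarrow> real \<Rightarrow> nat \<Rightarrow> real" where
  "Ec nbar th2 n = (cos (theta1 nbar * sqrt (real n + 1) / 2))\<^sup>2 * cos (th2 * sqrt (real n) / 2)
       - (sin (theta1 nbar * sqrt (real n + 1) / 2))\<^sup>2"
definition Rc :: "nat \<Rightarrow> real \<Rightarrow> nat \<Rightarrow> real" where
  "Rc nbar th2 n = sqrt (real (Suc n)) * ((sin (th2 * sqrt (real (Suc n)) / 2) / sqrt (real (Suc n))) *
         cos (theta1 nbar * sqrt (real (Suc n) + 1) / 2))"
definition Gs :: "nat \<Rightarrow> real \<Rightarrow> nat \<Rightarrow> real" where
  "Gs nbar th2 n = (if n = 0 then 0 else Gc nbar th2 (n-1))"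

lemma Mg_entry: "Mg nbar th2 i j = (if i = Suc j then complex_of_real (Gc nbar th2 j) else 0)"
  unfolding Mg_def mmul_fN_right cre_def adj_def ann_def Gc_def
  by (auto simp: add.commute)

lemma Me_entry: "Me nbar th2 = fN (\<lambda>n. complex_of_real (Ec nbar th2 n))"
  unfolding Me_def Ec_def ..

lemma Mm_entry: "Mm nbar th2 \<phi> i j = (if j = Suc i then exp (\<i> * complex_of_real \<phi>) * complex_of_real (Rc nbar th2 i) else 0)"
  unfolding Mm_def smul_def mmul_fN_right ann_def Rc_def
  by auto

lemma exp_phase_cnj: "exp (\<i> * complex_of_real \<phi>) * cnj (exp (\<i> * complex_of_real \<phi>)) = 1"
proof -
  have "cnj (exp (\<i> * complex_of_real \<phi>)) = exp (- (\<i> * complex_of_real \<phi>))"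
    by (simp add: exp_cnj)
  thus ?thesis by (simp add: exp_minus)
qed

lemma Kraus_entry:
  "Kraus nbar th2 \<phi> \<rho> i j =
     complex_of_real (Gs nbar th2 i * Gs nbar th2 j) * \<rho> (i-1) (j-1)
   + complex_of_real (Ec nbar th2 i * Ec nbar th2 j) * \<rho> i j
   + complex_of_real (Rc nbar th2 i * Rc nbar th2 j) * \<rho> (Suc i) (Suc j)"
proof -
  have g: "mmul (mmul (Mg nbar th2) \<rho>) (adj (Mg nbar th2)) i j
        = complex_of_real (Gs nbar th2 i * Gs nbar th2 j) * \<rho> (i-1) (j-1)"
    by (simp add: mmul_adj_up[OF Mg_entry] mmul_up[OF Mg_entry] Gs_def)
  have e: "mmul (mmul (Me nbar th2) \<rho>) (adj (Me nbar th2)) i j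
        = complex_of_real (Ec nbar th2 i * Ec nbar th2 j) * \<rho> i j"
    by (simp add: Me_entry mmul_adj_fN mmul_fN_left)
  have m: "mmul (mmul (Mm nbar th2 \<phi>) \<rho>) (adj (Mm nbar th2 \<phi>)) i j
        = complex_of_real (Rc nbar th2 i * Rc nbar th2 j) * \<rho> (Suc i) (Suc j)"
  proof -
    have "mmul (mmul (Mm nbar th2 \<phi>) \<rho>) (adj (Mm nbar th2 \<phi>)) i j
       = (exp (\<i> * complex_of_real \<phi>) * cnj (exp (\<i> * complex_of_real \<phi>))) *
         (complex_of_real (Rc nbar th2 i * Rc nbar th2 j) * \<rho> (Suc i) (Suc j))"
      by (simp add: mmul_adj_down[OF Mm_entry] mmul_down[OF Mm_entry] mult_ac)
    thus ?thesis by (simp only: exp_phase_cnj mult_1)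
  qed
  show ?thesis unfolding Kraus_def madd_def g e m by simp
qed



definition aa :: "nat \<Rightarrow> nat \<Rightarrow> real" where "aa nbar n = theta1 nbar * sqrt (real n + 1)"
definition bb :: "real \<Rightarrow> nat \<Rightarrow> real" where "bb th2 n = th2 * sqrt (real n) / 2"
definition uu :: "nat \<Rightarrow> nat \<Rightarrow> real" where "uu nbar n = (cos (aa nbar n / 2))\<^sup>2"
definition UU :: "real \<Rightarrow> nat \<Rightarrow> real" where "UU th2 n = (cos (bb th2 n / 2))\<^sup>2"

lemma half_double: "x = 2 * (x / 2)" for x :: real by simp

lemma Gc_sq: "(Gc nbar th2 n)\<^sup>2 = 4 * (UU th2 n)\<^sup>2 * uu nbar n * (1 - uu nbar n)"
proof -
  have sq: "sqrt (real n + 1) \<noteq> 0" by simp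
  have "Gc nbar th2 n = (1 + cos (bb th2 n)) * sin (aa nbar n) / 2"
    unfolding Gc_def aa_def bb_def using sq by (simp add: field_simps)
  also have "cos (bb th2 n) = 2 * (cos (bb th2 n / 2))\<^sup>2 - 1"
    by (subst half_double[of "bb th2 n"], subst cos_double_cos) simp
  also have "sin (aa nbar n) = 2 * sin (aa nbar n / 2) * cos (aa nbar n / 2)"
    by (subst half_double[of "aa nbar n"], subst sin_double) simp
  finally have "Gc nbar th2 n = 2 * (cos (bb th2 n / 2))\<^sup>2 * sin (aa nbar n / 2) * cos (aa nbar n / 2)"
    by simp
  hence "(Gc nbar th2 n)\<^sup>2 = 4 * ((cos (bb th2 n / 2))\<^sup>2)\<^sup>2 * (cos (aa nbar n / 2))\<^sup>2 * (sin (aa nbar n / 2))\<^sup>2"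
    by (simp add: power_mult_distrib power2_eq_square)
  thus ?thesis unfolding UU_def uu_def by (simp add: sin_squared_eq)
qed

lemma Ec_aux: "(E::real) = x*(2*y-1) - (1-x) \<Longrightarrow> E = 2*x*y - 1" by (simp add: algebra_simps)

lemma Ec_eq: "Ec nbar th2 n = 2 * uu nbar n * UU th2 n - 1"
proof -
  have "cos (bb th2 n) = 2 * (cos (bb th2 n / 2))\<^sup>2 - 1"
    by (subst half_double[of "bb th2 n"], subst cos_double_cos) simp
  moreover have "Ec nbar th2 n = (cos (aa nbar n / 2))\<^sup>2 * cos (bb th2 n) - (sin (aa nbar n / 2))\<^sup>2"
    unfolding Ec_def aa_def bb_def ..
  ultimately have "Ec nbar th2 n = (cos (aa nbar n / 2))\<^sup>2 * (2 * (cos (bb th2 n / 2))\<^sup>2 - 1) - (1 - (cos (aa nbar n / 2))\<^sup>2)"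
    by (simp only: sin_squared_eq)
  thus ?thesis unfolding uu_def UU_def by (simp only: Ec_aux)
qed

lemma Rc_sq: "(Rc nbar th2 n)\<^sup>2 = 4 * UU th2 (Suc n) * (1 - UU th2 (Suc n)) * uu nbar (Suc n)"
proof -
  have sq: "sqrt (real (Suc n)) \<noteq> 0" by simp
  have "Rc nbar th2 n = sin (bb th2 (Suc n)) * cos (aa nbar (Suc n) / 2)"
    unfolding Rc_def aa_def bb_def using sq by simp
  also have "sin (bb th2 (Suc n)) = 2 * sin (bb th2 (Suc n) / 2) * cos (bb th2 (Suc n) / 2)"
    by (subst half_double[of "bb th2 (Suc n)"], subst sin_double) simp
  finally have "(Rc nbar th2 n)\<^sup>2 = 4 * (cos (bb th2 (Suc n) / 2))\<^sup>2 * (sin (bb th2 (Suc n) / 2))\<^sup>2 * (cos (aa nbar (Suc n) / 2))\<^sup>2"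
    by (simp add: power_mult_distrib power2_eq_square)
  thus ?thesis unfolding UU_def uu_def by (simp add: sin_squared_eq)
qed

definition Pg where "Pg nbar th2 n = 4 * (UU th2 n)\<^sup>2 * uu nbar n * (1 - uu nbar n)"
definition Pe where "Pe nbar th2 n = (2 * uu nbar n * UU th2 n - 1)\<^sup>2"
definition Pm where "Pm nbar th2 n = 4 * UU th2 n * (1 - UU th2 n) * uu nbar n"

lemma P_sum: "Pg nbar th2 n + Pe nbar th2 n + Pm nbar th2 n = 1"
  unfolding Pg_def Pe_def Pm_def by (simp add: power2_eq_square algebra_simps)

lemma Pm_0: "Pm nbar th2 0 = 0"
  unfolding Pm_def UU_def bb_def by simp

lemma Gs_sq: "(Gs nbar th2 n)\<^sup>2 = (if n = 0 then 0 else Pg nbar th2 (n-1))"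
  by (simp add: Gs_def Gc_sq Pg_def)
lemma Ec_sq: "(Ec nbar th2 n)\<^sup>2 = Pe nbar th2 n"
  by (simp add: Ec_eq Pe_def)
lemma Rc_sq': "(Rc nbar th2 n)\<^sup>2 = Pm nbar th2 (Suc n)"
  by (simp add: Rc_sq Pm_def)

lemma Gc_D: "Gc nbar th2 (4 * nbar + 3) = 0"
proof -
  have "sqrt (real (4 * nbar + 3) + 1) = 2 * sqrt (real nbar + 1)"
  proof -
    have "real (4 * nbar + 3) + 1 = 2\<^sup>2 * (real nbar + 1)" by simp
    thus ?thesis by (simp only: real_sqrt_mult real_sqrt_abs)
  qed
  hence "theta1 nbar * sqrt (real (4 * nbar + 3) + 1) = 2 * pi"
    unfolding theta1_def by simp
  thus ?thesis unfolding Gc_def by simp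
qed



lemma aa_half: "aa nbar n / 2 = pi / 2 * (sqrt (real n + 1) / sqrt (real nbar + 1))"
  unfolding aa_def theta1_def by simp

lemma alpha_aa: "alpha_n nbar n = aa nbar n"
  unfolding alpha_n_def aa_def theta1_def by (simp add: real_sqrt_divide)

lemma beta_bb: "beta_n th2 n = bb th2 n"
  unfolding beta_n_def bb_def ..

lemma ratio_lt1: "n < nbar \<Longrightarrow> sqrt (real n + 1) / sqrt (real nbar + 1) < 1"
  by (simp add: divide_less_eq)
lemma ratio_gt1: "nbar < n \<Longrightarrow> 1 < sqrt (real n + 1) / sqrt (real nbar + 1)"
  by (simp add: less_divide_eq)
lemma ratio_le2: "n \<le> 4 * nbar + 3 \<Longrightarrow> sqrt (real n + 1) / sqrt (real nbar + 1) \<le> 2"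
proof -
  assume "n \<le> 4 * nbar + 3"
  hence "sqrt (real n + 1) \<le> sqrt (2\<^sup>2 * (real nbar + 1))" by simp
  also have "\<dots> = 2 * sqrt (real nbar + 1)" by (simp only: real_sqrt_mult real_sqrt_abs)
  finally show ?thesis by (simp add: divide_le_eq)
qed
lemma ratio_pos: "0 < sqrt (real n + 1) / sqrt (real nbar + 1)" by simp

lemma uu_pos:
  assumes "n \<le> 4 * nbar + 3" "n \<noteq> nbar"
  shows "0 < uu nbar n"
proof -
  define r where "r = sqrt (real n + 1) / sqrt (real nbar + 1)"
  have x: "aa nbar n / 2 = pi / 2 * r" unfolding r_def aa_half ..
  have "cos (pi / 2 * r) \<noteq> 0"
  proof (cases "n < nbar")
    case True
    hence "r < 1" unfolding r_def by (rule ratio_lt1)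
    moreover have "0 < r" unfolding r_def by (rule ratio_pos)
    ultimately have "0 < cos (pi / 2 * r)" by (intro cos_gt_zero) (auto simp: mult_less_cancel_left1 intro!: mult_pos_pos)
    thus ?thesis by simp
  next
    case False
    hence "1 < r" unfolding r_def using assms(2) by (intro ratio_gt1) simp
    moreover have "r \<le> 2" unfolding r_def using assms(1) by (rule ratio_le2)
    ultimately have "0 < cos (pi - pi / 2 * r)"
      by (intro cos_gt_zero_pi) (auto simp: algebra_simps)
    thus ?thesis by simp
  qed
  thus ?thesis unfolding uu_def x by simp
qed

lemma uu_lt1:
  assumes "n < nbar"
  shows "uu nbar n < 1"
proof -
  define r where "r = sqrt (real n + 1) / sqrt (real nbar + 1)"
  have x: "aa nbar n / 2 = pi / 2 * r" unfolding r_def aa_half ..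
  have "r < 1" unfolding r_def using assms by (rule ratio_lt1)
  moreover have "0 < r" unfolding r_def by (rule ratio_pos)
  ultimately have "0 < sin (pi / 2 * r)" by (intro sin_gt_zero) auto
  hence "0 < (sin (aa nbar n / 2))\<^sup>2" unfolding x by simp
  thus ?thesis unfolding uu_def sin_squared_eq by simp
qed

lemma uu_nbar: "uu nbar nbar = 0"
  unfolding uu_def aa_half by simp

lemma uu_D: "uu nbar (4 * nbar + 3) = 1"
proof -
  have "sqrt (real (4 * nbar + 3) + 1) = 2 * sqrt (real nbar + 1)"
  proof -
    have "real (4 * nbar + 3) + 1 = 2\<^sup>2 * (real nbar + 1)" by simp
    thus ?thesis by (simp only: real_sqrt_mult real_sqrt_abs)
  qed
  thus ?thesis unfolding uu_def aa_half by simp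
qed

lemma uu_le1: "uu nbar n \<le> 1" unfolding uu_def by (simp add: abs_square_le_1)
lemma UU_le1: "UU th2 n \<le> 1" unfolding UU_def by (simp add: abs_square_le_1)
lemma uu_ge0: "0 \<le> uu nbar n" unfolding uu_def by simp
lemma UU_ge0: "0 \<le> UU th2 n" unfolding UU_def by simp

lemma UU_0: "UU th2 0 = 1" unfolding UU_def bb_def by simp

lemma UU_pos:
  assumes "0 < th2" "\<forall>n\<in>{1..4 * nbar + 3}. \<forall>k::nat. th2 \<noteq> real k * pi / sqrt (real n)"
    and "n \<le> 4 * nbar + 3"
  shows "0 < UU th2 n"
proof (cases "n = 0")
  case True thus ?thesis by (simp add: UU_0)
next
  case False
  hence n1: "n \<in> {1..4 * nbar + 3}" using assms(3) by auto
  have sq: "0 < sqrt (real n)" using False by simp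
  have "cos (bb th2 n / 2) \<noteq> 0"
  proof
    assume "cos (bb th2 n / 2) = 0"
    then obtain i where i: "odd i" "bb th2 n / 2 = of_int i * (pi / 2)"
      using cos_zero_iff_int by blast
    have ypos: "0 < bb th2 n / 2" unfolding bb_def using assms(1) sq by simp
    hence "0 < of_int i * (pi / 2)" using i by simp
    hence ipos: "0 < i" by (simp add: zero_less_mult_iff)
    have "th2 = real (nat (2 * i)) * pi / sqrt (real n)"
    proof -
      have "th2 * sqrt (real n) = of_int (2 * i) * pi" using i(2) unfolding bb_def by simp
      thus ?thesis using sq ipos by (simp add: field_simps)
    qed
    thus False using assms(2) n1 by blast
  qed
  thus ?thesis unfolding UU_def by simp
qed

lemma UU_lt1:
  assumes "0 < th2" "\<forall>n\<in>{1..4 * nbar + 3}. \<forall>k::nat. th2 \<noteq> real k * pi / sqrt (real n)"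
    and "1 \<le> n" "n \<le> 4 * nbar + 3"
  shows "UU th2 n < 1"
proof -
  have n1: "n \<in> {1..4 * nbar + 3}" using assms(3,4) by auto
  have sq: "0 < sqrt (real n)" using assms(3) by simp
  have "sin (bb th2 n / 2) \<noteq> 0"
  proof
    assume "sin (bb th2 n / 2) = 0"
    then obtain i :: int where i: "bb th2 n / 2 = of_int i * pi"
      using sin_zero_iff_int2 by blast
    have ypos: "0 < bb th2 n / 2" unfolding bb_def using assms(1) sq by simp
    hence "0 < of_int i * pi" using i by simp
    hence ipos: "0 < i" by (simp add: zero_less_mult_iff)
    have "th2 = real (nat (4 * i)) * pi / sqrt (real n)"
    proof -
      have "th2 * sqrt (real n) = of_int (4 * i) * pi" using i unfolding bb_def by simp
      thus ?thesis using sq ipos by (simp add: field_simps)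
    qed
    thus False using assms(2) n1 by blast
  qed
  hence "0 < (sin (bb th2 n / 2))\<^sup>2" by simp
  thus ?thesis unfolding UU_def sin_squared_eq by simp
qed



definition Tf :: "nat \<Rightarrow> real \<Rightarrow> (nat \<Rightarrow> real) \<Rightarrow> nat \<Rightarrow> real" where
  "Tf nbar th2 w n = Pg nbar th2 n * w (Suc n) + Pe nbar th2 n * w n + Pm nbar th2 n * w (n - 1)"

lemma Tf_diff: "Tf nbar th2 w n - w n = Pg nbar th2 n * (w (Suc n) - w n) + Pm nbar th2 n * (w (n-1) - w n)"
proof -
  have "Pe nbar th2 n = 1 - Pg nbar th2 n - Pm nbar th2 n" using P_sum[of nbar th2 n] by linarith
  show ?thesis by (simp only: Tf_def \<open>Pe nbar th2 n = _\<close>) (simp add: algebra_simps)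
qed

context
  fixes nbar :: nat and th2 \<eta> :: real and f :: "nat \<Rightarrow> real"
  assumes nb: "1 \<le> nbar" and th: "0 < th2"
    and hyp: "\<forall>n\<in>{1..4 * nbar + 3}. \<forall>k::nat. th2 \<noteq> real k * pi / sqrt (real n)"
    and e0: "0 < \<eta>" and e1: "\<eta> < 1" and isf: "is_f nbar th2 \<eta> f"
begin

lemma f_nbar: "f nbar = 0" and f_nbar1: "f (nbar + 1) = 1" and f_nbarm1: "f (nbar - 1) = 1"
  using isf unfolding is_f_def by auto

lemma f_up: "nbar < n \<Longrightarrow> n < 4 * nbar + 3 \<Longrightarrow> f (Suc n) = f n + \<eta> * (1 - UU th2 n) * (f n - f (n - 1))"
  using isf unfolding is_f_def beta_bb UU_def sin_squared_eq by auto

lemma f_down: "0 < n \<Longrightarrow> n < nbar \<Longrightarrow> f (n - 1) = f n + \<eta> * (1 - uu nbar n) * UU th2 n * (f n - f (Suc n))"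
  using isf unfolding is_f_def beta_bb alpha_aa UU_def uu_def sin_squared_eq by auto

lemma up_aux: "nbar + 1 + m \<le> 4 * nbar + 3 \<Longrightarrow> 0 < f (nbar + 1 + m) - f (nbar + m) \<and> 1 \<le> f (nbar + 1 + m)"
proof (induction m)
  case 0 thus ?case using f_nbar f_nbar1 by simp
next
  case (Suc m)
  let ?n = "nbar + 1 + m"
  have IH: "0 < f ?n - f (?n - 1)" "1 \<le> f ?n" using Suc by auto
  have U: "UU th2 ?n < 1" using UU_lt1[OF th hyp, of ?n] Suc.prems by simp
  have eq: "f (Suc ?n) = f ?n + \<eta> * (1 - UU th2 ?n) * (f ?n - f (?n - 1))"
    using f_up[of ?n] Suc.prems by simp
  have "0 < \<eta> * (1 - UU th2 ?n) * (f ?n - f (?n - 1))" using e0 U IH by simp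
  thus ?case using eq IH by simp
qed

lemma d_up: "nbar < n \<Longrightarrow> n \<le> 4 * nbar + 3 \<Longrightarrow> 0 < f n - f (n - 1)"
  using up_aux[of "n - nbar - 1"] by (simp add: Suc_diff_Suc)  

lemma f_up_ge1: "nbar < n \<Longrightarrow> n \<le> 4 * nbar + 3 \<Longrightarrow> 1 \<le> f n"
  using up_aux[of "n - nbar - 1"] by simp

lemma down_aux: "m < nbar \<Longrightarrow> 0 < f (nbar - 1 - m) - f (nbar - m) \<and> 1 \<le> f (nbar - 1 - m)"
proof (induction m)
  case 0 thus ?case using f_nbar f_nbarm1 by simp
next
  case (Suc m)
  let ?n = "nbar - 1 - m"
  have IH: "0 < f ?n - f (Suc ?n)" "1 \<le> f ?n" using Suc by (auto simp: Suc_diff_Suc)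
  have n0: "0 < ?n" "?n < nbar" using Suc.prems by auto
  have u: "uu nbar ?n < 1" using uu_lt1 n0 by blast
  have U: "0 < UU th2 ?n" using UU_pos[OF th hyp, of ?n] n0 by simp
  have eq: "f (?n - 1) = f ?n + \<eta> * (1 - uu nbar ?n) * UU th2 ?n * (f ?n - f (Suc ?n))"
    using f_down n0 by blast
  have "0 < \<eta> * (1 - uu nbar ?n) * UU th2 ?n * (f ?n - f (Suc ?n))" using e0 u U IH by simp
  moreover have "?n - 1 = nbar - 1 - Suc m" "?n = nbar - Suc m" by auto
  ultimately show ?case using eq IH by simp
qed

lemma d_down: "n < nbar \<Longrightarrow> 0 < f n - f (Suc n)"
  using down_aux[of "nbar - 1 - n"] by (simp add: Suc_diff_Suc)

lemma f_down_ge1: "n < nbar \<Longrightarrow> 1 \<le> f n"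
  using down_aux[of "nbar - 1 - n"] by simp

lemma f_ge1: "n \<le> 4 * nbar + 3 \<Longrightarrow> n \<noteq> nbar \<Longrightarrow> 1 \<le> f n"
  using f_up_ge1 f_down_ge1 by (cases "n < nbar") auto

lemma f_ge0: "n \<le> 4 * nbar + 3 \<Longrightarrow> 0 \<le> f n"
  using f_ge1 f_nbar by (cases "n = nbar") force+

lemma Tf_lt: assumes "n \<le> 4 * nbar + 3" "n \<noteq> nbar" shows "Tf nbar th2 f n < f n"
proof -
  have u0: "0 < uu nbar n" using uu_pos assms by blast
  have u1: "uu nbar n \<le> 1" by (rule uu_le1)
  have U0: "0 < UU th2 n" using UU_pos[OF th hyp] assms by blast
  have U1: "UU th2 n \<le> 1" by (rule UU_le1)
  show ?thesis
  proof (cases "n < nbar")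
    case True
    define d where "d = f n - f (Suc n)"
    have d: "0 < d" unfolding d_def using d_down True by blast
    have ul: "uu nbar n < 1" using uu_lt1 True by blast
    have "Tf nbar th2 f n - f n = 4 * (UU th2 n)\<^sup>2 * uu nbar n * (1 - uu nbar n) * d * ((1 - UU th2 n) * \<eta> - 1)"
    proof (cases "n = 0")
      case True
      thus ?thesis unfolding Tf_diff Pm_0 Pg_def d_def using UU_0 by (simp add: algebra_simps)
    next
      case False
      hence q1: "f (n-1) - f n = \<eta> * (1 - uu nbar n) * UU th2 n * d" using f_down[of n] True unfolding d_def by simp
      have q2: "f (Suc n) - f n = - d" unfolding d_def by simp
      show ?thesis by (simp only: Tf_diff q1 q2 Pm_def Pg_def) (simp add: algebra_simps power2_eq_square)
    qed
    moreover have "0 < 4 * (UU th2 n)\<^sup>2 * uu nbar n * (1 - uu nbar n) * d" using U0 u0 ul d by simp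
    moreover have "(1 - UU th2 n) * \<eta> < 1"
    proof -
      have "(1 - UU th2 n) * \<eta> \<le> 1 * \<eta>" using U0 e0 by (intro mult_right_mono) auto
      thus ?thesis using e1 by simp
    qed
    ultimately have "Tf nbar th2 f n - f n < 0" by (simp add: mult_pos_neg)
    thus ?thesis by simp
  next
    case False
    hence gt: "nbar < n" using assms by simp
    define d where "d = f n - f (n - 1)"
    have d: "0 < d" unfolding d_def using d_up gt assms by blast
    have Ul: "UU th2 n < 1" using UU_lt1[OF th hyp, of n] gt assms by simp
    show ?thesis
    proof (cases "n = 4 * nbar + 3")
      case True
      have "Tf nbar th2 f n - f n = - (4 * UU th2 n * (1 - UU th2 n) * uu nbar n * d)"
        unfolding Tf_diff Pm_def Pg_def d_def True uu_D by (simp add: algebra_simps)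
      moreover have "0 < 4 * UU th2 n * (1 - UU th2 n) * uu nbar n * d" using U0 Ul u0 d by simp
      ultimately show ?thesis by linarith
    next
      case False
      hence q1: "f (Suc n) - f n = \<eta> * (1 - UU th2 n) * d" using f_up[of n] gt assms unfolding d_def by simp
      have q2: "f (n - 1) - f n = - d" unfolding d_def by simp
      have "Tf nbar th2 f n - f n = 4 * UU th2 n * (1 - UU th2 n) * uu nbar n * d * (UU th2 n * (1 - uu nbar n) * \<eta> - 1)"
        by (simp only: Tf_diff q1 q2 Pm_def Pg_def) (simp add: algebra_simps power2_eq_square)
      moreover have "0 < 4 * UU th2 n * (1 - UU th2 n) * uu nbar n * d" using U0 Ul u0 d by simp
      moreover have "UU th2 n * (1 - uu nbar n) * \<eta> < 1"
      proof -
        have "UU th2 n * (1 - uu nbar n) \<le> 1" using U1 u0 U0 u1 by (intro mult_le_one) auto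
        hence "UU th2 n * (1 - uu nbar n) * \<eta> \<le> 1 * \<eta>" using e0 by (intro mult_right_mono) auto
        thus ?thesis using e1 by simp
      qed
      ultimately have "Tf nbar th2 f n - f n < 0" by (simp add: mult_pos_neg)
      thus ?thesis by simp
    qed
  qed
qed

lemma Tf_nbar: "Tf nbar th2 f nbar = f nbar"
  using Tf_diff[of nbar th2 f nbar] unfolding Pg_def Pm_def uu_nbar by simp

lemma Tf_le: "n \<le> 4 * nbar + 3 \<Longrightarrow> Tf nbar th2 f n \<le> f n"
  using Tf_lt Tf_nbar by (cases "n = nbar") (auto intro: less_imp_le)

end


definition supp :: "nat \<Rightarrow> fmat \<Rightarrow> bool" where
  "supp D \<rho> \<longleftrightarrow> (\<forall>i j. (D < i \<or> D < j) \<longrightarrow> \<rho> i j = 0)"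

lemma supp_K:
  assumes "supp (4 * nbar + 3) \<rho>"
  shows "supp (4 * nbar + 3) (Kraus nbar th2 \<phi> \<rho>)"
  unfolding supp_def
proof (intro allI impI)
  fix i j assume ij: "4 * nbar + 3 < i \<or> 4 * nbar + 3 < j"
  have g: "complex_of_real (Gs nbar th2 i * Gs nbar th2 j) * \<rho> (i-1) (j-1) = 0"
  proof (cases "i - 1 = 4 * nbar + 3 \<or> j - 1 = 4 * nbar + 3")
    case True
    hence "Gs nbar th2 i * Gs nbar th2 j = 0" using ij unfolding Gs_def by (auto simp: Gc_D)
    thus ?thesis by simp
  next
    case False
    hence "4 * nbar + 3 < i - 1 \<or> 4 * nbar + 3 < j - 1" using ij by auto
    hence "\<rho> (i-1) (j-1) = 0" using assms unfolding supp_def by blast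
    thus ?thesis by simp
  qed
  show "Kraus nbar th2 \<phi> \<rho> i j = 0" unfolding Kraus_entry g
    using assms ij unfolding supp_def by auto
qed

lemma Kdiag: "Kraus nbar th2 \<phi> \<rho> n n =
     complex_of_real (if n = 0 then 0 else Pg nbar th2 (n-1)) * \<rho> (n-1) (n-1)
   + complex_of_real (Pe nbar th2 n) * \<rho> n n
   + complex_of_real (Pm nbar th2 (Suc n)) * \<rho> (Suc n) (Suc n)"
proof -
  have a: "Gs nbar th2 n * Gs nbar th2 n = (if n = 0 then 0 else Pg nbar th2 (n-1))"
    using Gs_sq[of nbar th2 n] by (simp add: power2_eq_square)
  have b: "Ec nbar th2 n * Ec nbar th2 n = Pe nbar th2 n"
    using Ec_sq[of nbar th2 n] by (simp add: power2_eq_square)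
  have c: "Rc nbar th2 n * Rc nbar th2 n = Pm nbar th2 (Suc n)"
    using Rc_sq'[of nbar th2 n] by (simp add: power2_eq_square)
  show ?thesis unfolding Kraus_entry a b c ..
qed

lemma Pg_D: "Pg nbar th2 (4 * nbar + 3) = 0"
  using Gc_sq[of nbar th2 "4 * nbar + 3"] unfolding Gc_D Pg_def by simp

lemma diag_sum:
  assumes "supp (4 * nbar + 3) \<rho>"
  shows "(\<Sum>n\<le>4 * nbar + 3. complex_of_real (w n) * Kraus nbar th2 \<phi> \<rho> n n)
       = (\<Sum>n\<le>4 * nbar + 3. complex_of_real (Tf nbar th2 w n) * \<rho> n n)"
proof -
  define D' where "D' = 4 * nbar + 2"
  have D: "4 * nbar + 3 = Suc D'" unfolding D'_def by simp
  have rD: "\<rho> (Suc (Suc D')) (Suc (Suc D')) = 0" using assms unfolding supp_def D by simp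
  have PgD: "Pg nbar th2 (Suc D') = 0" using Pg_D[of nbar th2] unfolding D .
  let ?g = "\<lambda>n. complex_of_real (if n = 0 then 0 else Pg nbar th2 (n-1))"
  let ?P = "\<lambda>n. complex_of_real (Pg nbar th2 n)"
  let ?E = "\<lambda>n. complex_of_real (Pe nbar th2 n)"
  let ?M = "\<lambda>n. complex_of_real (Pm nbar th2 n)"
  let ?w = "\<lambda>n. complex_of_real (w n)"
  have s1: "(\<Sum>n\<le>Suc D'. ?w n * (?g n * \<rho> (n-1) (n-1))) = (\<Sum>n\<le>Suc D'. ?P n * ?w (Suc n) * \<rho> n n)"
  proof -
    have "(\<Sum>n\<le>Suc D'. ?w n * (?g n * \<rho> (n-1) (n-1))) = (\<Sum>n\<le>D'. ?P n * ?w (Suc n) * \<rho> n n)"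
      by (subst sum.atMost_Suc_shift) (simp add: mult_ac)
    moreover have "(\<Sum>n\<le>Suc D'. ?P n * ?w (Suc n) * \<rho> n n) = (\<Sum>n\<le>D'. ?P n * ?w (Suc n) * \<rho> n n)"
      by (subst sum.atMost_Suc) (simp add: PgD)
    ultimately show ?thesis by simp
  qed
  have s3: "(\<Sum>n\<le>Suc D'. ?w n * (?M (Suc n) * \<rho> (Suc n) (Suc n))) = (\<Sum>n\<le>Suc D'. ?M n * ?w (n-1) * \<rho> n n)"
  proof -
    have "(\<Sum>n\<le>Suc D'. ?w n * (?M (Suc n) * \<rho> (Suc n) (Suc n))) = (\<Sum>n\<le>D'. ?M (Suc n) * ?w n * \<rho> (Suc n) (Suc n))"
      by (subst sum.atMost_Suc) (simp add: rD mult_ac)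
    moreover have "(\<Sum>n\<le>Suc D'. ?M n * ?w (n-1) * \<rho> n n) = (\<Sum>n\<le>D'. ?M (Suc n) * ?w n * \<rho> (Suc n) (Suc n))"
      by (subst sum.atMost_Suc_shift) (simp add: Pm_0)
    ultimately show ?thesis by simp
  qed
  have "(\<Sum>n\<le>Suc D'. ?w n * Kraus nbar th2 \<phi> \<rho> n n)
     = (\<Sum>n\<le>Suc D'. ?w n * (?g n * \<rho> (n-1) (n-1))) + (\<Sum>n\<le>Suc D'. ?E n * ?w n * \<rho> n n)
       + (\<Sum>n\<le>Suc D'. ?w n * (?M (Suc n) * \<rho> (Suc n) (Suc n)))"
    unfolding Kdiag by (simp add: sum.distrib algebra_simps)
  also have "\<dots> = (\<Sum>n\<le>Suc D'. complex_of_real (Tf nbar th2 w n) * \<rho> n n)"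
    unfolding s1 s3 Tf_def by (simp add: sum.distrib algebra_simps)
  finally show ?thesis unfolding D .
qed

lemma infsum_supp:
  fixes g :: "nat \<Rightarrow> complex"
  assumes "\<And>n. D < n \<Longrightarrow> g n = 0"
  shows "infsum g UNIV = (\<Sum>n\<le>D. g n)"
proof -
  have "infsum g UNIV = infsum g {..D}"
    by (rule infsum_cong_neutral) (use assms in auto)
  thus ?thesis by simp
qed

lemma mtrace_supp: "supp D \<rho> \<Longrightarrow> mtrace \<rho> = (\<Sum>n\<le>D. \<rho> n n)"
  unfolding mtrace_def supp_def by (rule infsum_supp) auto

lemma Lyap_supp: "supp D \<rho> \<Longrightarrow> Lyap f \<rho> = (\<Sum>n\<le>D. f n * Re (\<rho> n n))"
proof -
  assume s: "supp D \<rho>"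
  have "mtrace (mmul (fN (\<lambda>n. complex_of_real (f n))) \<rho>) = (\<Sum>n\<le>D. complex_of_real (f n) * \<rho> n n)"
    unfolding mtrace_def mmul_fN_left using s unfolding supp_def by (intro infsum_supp) auto
  thus ?thesis unfolding Lyap_def by (simp add: Re_sum)
qed



lemma cs3_real:
  fixes x1 x2 x3 y1 y2 y3 :: real
  shows "(x1*y1 + x2*y2 + x3*y3)\<^sup>2 \<le> (x1\<^sup>2 + x2\<^sup>2 + x3\<^sup>2) * (y1\<^sup>2 + y2\<^sup>2 + y3\<^sup>2)"
proof -
  have "(x1\<^sup>2 + x2\<^sup>2 + x3\<^sup>2) * (y1\<^sup>2 + y2\<^sup>2 + y3\<^sup>2) - (x1*y1 + x2*y2 + x3*y3)\<^sup>2
      = (x1*y2 - x2*y1)\<^sup>2 + (x1*y3 - x3*y1)\<^sup>2 + (x2*y3 - x3*y2)\<^sup>2"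
    by (simp add: power2_eq_square algebra_simps)
  moreover have "0 \<le> (x1*y2 - x2*y1)\<^sup>2 + (x1*y3 - x3*y1)\<^sup>2 + (x2*y3 - x3*y2)\<^sup>2" by simp
  ultimately show ?thesis by linarith
qed

lemma cmod_le_sqrt:
  assumes "(cmod z)\<^sup>2 \<le> P * Q" "0 \<le> P" "0 \<le> Q"
  shows "cmod z \<le> sqrt P * sqrt Q"
proof -
  have "cmod z = sqrt ((cmod z)\<^sup>2)" by simp
  also have "\<dots> \<le> sqrt (P * Q)" using assms(1) by (rule real_sqrt_le_mono)
  finally show ?thesis by (simp add: real_sqrt_mult)
qed

lemma cs3:
  fixes z1 z2 z3 :: complex and a1 a2 a3 b1 b2 b3 P1 P2 P3 Q1 Q2 Q3 :: real
  assumes "0 \<le> P1" "0 \<le> P2" "0 \<le> P3" "0 \<le> Q1" "0 \<le> Q2" "0 \<le> Q3"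
    and "(cmod z1)\<^sup>2 \<le> P1 * Q1" "(cmod z2)\<^sup>2 \<le> P2 * Q2" "(cmod z3)\<^sup>2 \<le> P3 * Q3"
  shows "(cmod (complex_of_real (a1*b1) * z1 + complex_of_real (a2*b2) * z2 + complex_of_real (a3*b3) * z3))\<^sup>2
         \<le> (a1*a1*P1 + a2*a2*P2 + a3*a3*P3) * (b1*b1*Q1 + b2*b2*Q2 + b3*b3*Q3)"
proof -
  define x1 where "x1 = \<bar>a1\<bar> * sqrt P1"
  define x2 where "x2 = \<bar>a2\<bar> * sqrt P2"
  define x3 where "x3 = \<bar>a3\<bar> * sqrt P3"
  define y1 where "y1 = \<bar>b1\<bar> * sqrt Q1"
  define y2 where "y2 = \<bar>b2\<bar> * sqrt Q2"
  define y3 where "y3 = \<bar>b3\<bar> * sqrt Q3"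
  have t: "cmod (complex_of_real (a*b) * z) \<le> (\<bar>a\<bar> * sqrt P) * (\<bar>b\<bar> * sqrt Q)"
    if "(cmod z)\<^sup>2 \<le> P * Q" "0 \<le> P" "0 \<le> Q" for a b P Q and z :: complex
  proof -
    have "cmod (complex_of_real (a*b) * z) = \<bar>a\<bar> * \<bar>b\<bar> * cmod z" by (simp add: norm_mult abs_mult)
    also have "\<dots> \<le> \<bar>a\<bar> * \<bar>b\<bar> * (sqrt P * sqrt Q)"
      using cmod_le_sqrt[OF that] by (intro mult_left_mono) auto
    finally show ?thesis by (simp add: mult_ac)
  qed
  have "cmod (complex_of_real (a1*b1) * z1 + complex_of_real (a2*b2) * z2 + complex_of_real (a3*b3) * z3)
      \<le> cmod (complex_of_real (a1*b1) * z1) + cmod (complex_of_real (a2*b2) * z2) + cmod (complex_of_real (a3*b3) * z3)"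
    by (rule order_trans[OF norm_triangle_ineq add_right_mono[OF norm_triangle_ineq]])
  also have "\<dots> \<le> x1*y1 + x2*y2 + x3*y3"
    unfolding x1_def x2_def x3_def y1_def y2_def y3_def using t assms by (meson add_mono)
  finally have le: "cmod (complex_of_real (a1*b1) * z1 + complex_of_real (a2*b2) * z2 + complex_of_real (a3*b3) * z3) \<le> x1*y1 + x2*y2 + x3*y3" .
  have "(cmod (complex_of_real (a1*b1) * z1 + complex_of_real (a2*b2) * z2 + complex_of_real (a3*b3) * z3))\<^sup>2 \<le> (x1*y1 + x2*y2 + x3*y3)\<^sup>2"
    using le by (intro power_mono) auto
  also have "\<dots> \<le> (x1\<^sup>2 + x2\<^sup>2 + x3\<^sup>2) * (y1\<^sup>2 + y2\<^sup>2 + y3\<^sup>2)" by (rule cs3_real)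
  also have "\<dots> = (a1*a1*P1 + a2*a2*P2 + a3*a3*P3) * (b1*b1*Q1 + b2*b2*Q2 + b3*b3*Q3)"
    unfolding x1_def x2_def x3_def y1_def y2_def y3_def using assms
    by (simp add: power_mult_distrib power2_eq_square[symmetric])
  finally show ?thesis .
qed

definition Inv :: "nat \<Rightarrow> fmat \<Rightarrow> bool" where
  "Inv D \<rho> \<longleftrightarrow> supp D \<rho> \<and> (\<forall>i. Im (\<rho> i i) = 0 \<and> 0 \<le> Re (\<rho> i i)) \<and>
     (\<forall>i j. (cmod (\<rho> i j))\<^sup>2 \<le> Re (\<rho> i i) * Re (\<rho> j j)) \<and> (\<Sum>n\<le>D. \<rho> n n) = 1"

lemma Inv_K:
  assumes "Inv (4 * nbar + 3) \<rho>"
  shows "Inv (4 * nbar + 3) (Kraus nbar th2 \<phi> \<rho>)"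
proof -
  let ?K = "Kraus nbar th2 \<phi> \<rho>"
  have s: "supp (4 * nbar + 3) \<rho>" and d: "\<And>i. Im (\<rho> i i) = 0" "\<And>i. 0 \<le> Re (\<rho> i i)"
    and c: "\<And>i j. (cmod (\<rho> i j))\<^sup>2 \<le> Re (\<rho> i i) * Re (\<rho> j j)" and tr: "(\<Sum>n\<le>4 * nbar + 3. \<rho> n n) = 1"
    using assms unfolding Inv_def by auto
  have ReK: "Re (?K i i) = Gs nbar th2 i * Gs nbar th2 i * Re (\<rho> (i-1) (i-1)) + Ec nbar th2 i * Ec nbar th2 i * Re (\<rho> i i)
      + Rc nbar th2 i * Rc nbar th2 i * Re (\<rho> (Suc i) (Suc i))" for i
    unfolding Kraus_entry by simp
  have ImK: "Im (?K i i) = 0" for i unfolding Kraus_entry using d by simp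
  have sq0: "0 \<le> a * a * r" if "0 \<le> r" for a r :: real using that by simp
  have ReK0: "0 \<le> Re (?K i i)" for i unfolding ReK using d by (intro add_nonneg_nonneg sq0) auto
  have cK: "(cmod (?K i j))\<^sup>2 \<le> Re (?K i i) * Re (?K j j)" for i j
    unfolding ReK unfolding Kraus_entry by (rule cs3) (use d c in auto)
  have "(\<Sum>n\<le>4 * nbar + 3. ?K n n) = (\<Sum>n\<le>4 * nbar + 3. complex_of_real 1 * ?K n n)" by simp
  also have "\<dots> = (\<Sum>n\<le>4 * nbar + 3. complex_of_real (Tf nbar th2 (\<lambda>_. 1) n) * \<rho> n n)"
    by (rule diag_sum[OF s])
  also have "\<dots> = 1" unfolding Tf_def using P_sum[of nbar th2] tr by simp
  finally show ?thesis unfolding Inv_def using supp_K[OF s] ImK ReK0 cK by blast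
qed

lemma Inv_iter: "Inv (4 * nbar + 3) \<rho> \<Longrightarrow> Inv (4 * nbar + 3) ((Kraus nbar th2 \<phi> ^^ k) \<rho>)"
  by (induction k) (auto intro: Inv_K)



lemma sum_two:
  fixes g :: "nat \<Rightarrow> complex"
  assumes "i \<le> D" "j \<le> D" "i \<noteq> j" "\<And>a. a \<noteq> i \<Longrightarrow> a \<noteq> j \<Longrightarrow> g a = 0"
  shows "(\<Sum>a\<le>D. g a) = g i + g j"
proof -
  have "(\<Sum>a\<le>D. g a) = (\<Sum>a\<in>{i,j}. g a)"
    by (rule sum.mono_neutral_right) (use assms in auto)
  thus ?thesis using assms(3) by simp
qed

lemma sum_one:
  fixes g :: "nat \<Rightarrow> complex"
  assumes "i \<le> D" "\<And>a. a \<noteq> i \<Longrightarrow> g a = 0"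
  shows "(\<Sum>a\<le>D. g a) = g i"
proof -
  have "(\<Sum>a\<le>D. g a) = (\<Sum>a\<in>{i}. g a)"
    by (rule sum.mono_neutral_right) (use assms in auto)
  thus ?thesis by simp
qed

lemma discr:
  fixes p q c :: real
  assumes "0 \<le> p" "0 \<le> c" "\<And>t. 0 \<le> p * (t * t) - 2 * t * c + q"
  shows "c * c \<le> p * q"
proof (cases "p = 0")
  case True
  show ?thesis
  proof (cases "c = 0")
    case True thus ?thesis using \<open>p = 0\<close> by simp
  next
    case False
    hence c: "0 < c" using assms(2) by simp
    have "0 \<le> p * (((q+1)/(2*c)) * ((q+1)/(2*c))) - 2 * ((q+1)/(2*c)) * c + q" by (rule assms(3))
    also have "\<dots> = -1" using True c by (simp add: field_simps)
    finally show ?thesis by simp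
  qed
next
  case False
  hence p: "0 < p" using assms(1) by simp
  have "0 \<le> p * ((c/p) * (c/p)) - 2 * (c/p) * c + q" by (rule assms(3))
  also have "\<dots> = q - c * c / p" using p by (simp add: field_simps)
  finally have "c * c / p \<le> q" by simp
  thus ?thesis using p by (simp add: divide_le_eq mult.commute)
qed

lemma density_Inv:
  assumes "density_on D \<rho>"
  shows "Inv D \<rho>"
proof -
  have s: "supp D \<rho>" using assms unfolding density_on_def supp_def by blast
  have h: "\<And>i j. \<rho> j i = cnj (\<rho> i j)" using assms unfolding density_on_def by blast
  have psd: "\<And>v. 0 \<le> Re (\<Sum>i\<le>D. \<Sum>j\<le>D. cnj (v i) * \<rho> i j * v j)" using assms unfolding density_on_def by blast
  have tr: "mtrace \<rho> = 1" using assms unfolding density_on_def by blast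
  have im: "Im (\<rho> i i) = 0" for i using h[of i i] by (metis cnj.simps(2) neg_equal_zero)
  have re: "0 \<le> Re (\<rho> i i)" for i
  proof (cases "i \<le> D")
    case False thus ?thesis using s unfolding supp_def by simp
  next
    case True
    define v :: "nat \<Rightarrow> complex" where "v = (\<lambda>k. if k = i then 1 else 0)"
    have "(\<Sum>a\<le>D. \<Sum>b\<le>D. cnj (v a) * \<rho> a b * v b) = (\<Sum>b\<le>D. cnj (v i) * \<rho> i b * v b)"
      by (rule sum_one[OF True]) (simp add: v_def)
    also have "\<dots> = cnj (v i) * \<rho> i i * v i"
      by (rule sum_one[OF True]) (simp add: v_def)
    finally show ?thesis using psd[of v] by (simp add: v_def)
  qed
  have cs: "(cmod (\<rho> i j))\<^sup>2 \<le> Re (\<rho> i i) * Re (\<rho> j j)" for i j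
  proof (cases "i \<le> D \<and> j \<le> D")
    case False
    hence "\<rho> i j = 0" using s unfolding supp_def by auto
    thus ?thesis using re by simp
  next
    case True
    show ?thesis
    proof (cases "i = j")
      case True
      have "\<rho> i i = complex_of_real (Re (\<rho> i i))" using im[of i] by (simp add: complex_eq_iff)
      hence "cmod (\<rho> i i) = \<bar>Re (\<rho> i i)\<bar>" by (metis norm_of_real)
      thus ?thesis using True by (simp add: power2_eq_square)
    next
      case False
      define z where "z = \<rho> i j"
      have zj: "\<rho> j i = cnj z" unfolding z_def by (rule h)
      have zz: "z * cnj z = complex_of_real ((cmod z)\<^sup>2)" by (rule complex_norm_square[symmetric])
      have q: "0 \<le> Re (\<rho> i i) * (t * t) - 2 * t * (cmod z)\<^sup>2 + (cmod z)\<^sup>2 * Re (\<rho> j j)" for t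
      proof -
        define v :: "nat \<Rightarrow> complex" where "v = (\<lambda>k. if k = i then complex_of_real t else if k = j then - cnj z else 0)"
        have vi: "v i = complex_of_real t" and vj: "v j = - cnj z" unfolding v_def using False by auto
        have "(\<Sum>a\<le>D. \<Sum>b\<le>D. cnj (v a) * \<rho> a b * v b)
            = (\<Sum>b\<le>D. cnj (v i) * \<rho> i b * v b) + (\<Sum>b\<le>D. cnj (v j) * \<rho> j b * v b)"
          by (rule sum_two) (use True False in \<open>auto simp: v_def\<close>)
        also have "\<dots> = (cnj (v i) * \<rho> i i * v i + cnj (v i) * \<rho> i j * v j)
                        + (cnj (v j) * \<rho> j i * v i + cnj (v j) * \<rho> j j * v j)"
          by (subst (1 2) sum_two[of i D j]) (use True False in \<open>auto simp: v_def\<close>)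
        also have "\<dots> = complex_of_real (t * t) * \<rho> i i - 2 * complex_of_real t * (z * cnj z) + (z * cnj z) * \<rho> j j"
          unfolding vi vj zj z_def[symmetric] by (simp add: algebra_simps)
        also have "\<dots> = complex_of_real (t * t) * \<rho> i i - 2 * complex_of_real t * complex_of_real ((cmod z)\<^sup>2) + complex_of_real ((cmod z)\<^sup>2) * \<rho> j j"
          unfolding zz ..
        finally show ?thesis using psd[of v] by (simp add: mult_ac)
      qed
      have "(cmod z)\<^sup>2 * (cmod z)\<^sup>2 \<le> Re (\<rho> i i) * ((cmod z)\<^sup>2 * Re (\<rho> j j))"
        by (rule discr) (use re q in auto)
      hence "(cmod z)\<^sup>2 * (cmod z)\<^sup>2 \<le> (cmod z)\<^sup>2 * (Re (\<rho> i i) * Re (\<rho> j j))" by (simp add: mult_ac)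
      hence m: "(cmod z)\<^sup>2 * (cmod z)\<^sup>2 \<le> (cmod z)\<^sup>2 * (Re (\<rho> i i) * Re (\<rho> j j))" .
      show ?thesis
      proof (cases "z = 0")
        case True thus ?thesis using re unfolding z_def by simp
      next
        case False
        hence "0 < (cmod z)\<^sup>2" by simp
        from mult_left_le_imp_le[OF m this] show ?thesis unfolding z_def .
      qed
    qed
  qed
  have "(\<Sum>n\<le>D. \<rho> n n) = 1" using tr mtrace_supp[OF s] by simp
  thus ?thesis unfolding Inv_def using s im re cs by blast
qed



lemma not_ketbra:
  assumes I: "Inv D \<rho>" and nD: "nbar \<le> D"
    and z: "\<forall>n\<le>D. n \<noteq> nbar \<longrightarrow> Re (\<rho> n n) = 0"
  shows "\<rho> = ketbra nbar"
proof -
  have s: "supp D \<rho>" and im: "\<And>i. Im (\<rho> i i) = 0" and re: "\<And>i. 0 \<le> Re (\<rho> i i)"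
    and c: "\<And>i j. (cmod (\<rho> i j))\<^sup>2 \<le> Re (\<rho> i i) * Re (\<rho> j j)" and tr: "(\<Sum>n\<le>D. \<rho> n n) = 1"
    using I unfolding Inv_def by auto
  have p0: "Re (\<rho> n n) = 0" if "n \<noteq> nbar" for n
  proof (cases "n \<le> D")
    case True thus ?thesis using z that by blast
  next
    case False thus ?thesis using s unfolding supp_def by simp
  qed
  have off: "\<rho> i j = 0" if "i \<noteq> nbar \<or> j \<noteq> nbar" for i j
  proof -
    have "Re (\<rho> i i) * Re (\<rho> j j) = 0" using that p0 by auto
    hence "(cmod (\<rho> i j))\<^sup>2 \<le> 0" using c[of i j] by linarith
    thus ?thesis by simp
  qed
  have "(\<Sum>n\<le>D. \<rho> n n) = \<rho> nbar nbar" by (rule sum_one[OF nD]) (use off in auto)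
  hence one: "\<rho> nbar nbar = 1" using tr by simp
  show ?thesis
  proof (intro ext)
    fix i j show "\<rho> i j = ketbra nbar i j"
      unfolding ketbra_def using off one by auto
  qed
qed

context
  fixes nbar :: nat and th2 \<eta> :: real and f :: "nat \<Rightarrow> real"
  assumes nb: "1 \<le> nbar" and th: "0 < th2"
    and hyp: "\<forall>n\<in>{1..4 * nbar + 3}. \<forall>k::nat. th2 \<noteq> real k * pi / sqrt (real n)"
    and e0: "0 < \<eta>" and e1: "\<eta> < 1" and isf: "is_f nbar th2 \<eta> f"
begin

lemmas fge1 = f_ge1[OF nb th hyp e0 e1 isf]
lemmas fge0 = f_ge0[OF nb th hyp e0 e1 isf]
lemmas Tfle = Tf_le[OF nb th hyp e0 e1 isf]
lemmas Tflt = Tf_lt[OF nb th hyp e0 e1 isf]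
lemmas fnbar = f_nbar[OF nb th hyp e0 e1 isf]

lemma Lyap_step:
  assumes "Inv (4 * nbar + 3) \<rho>"
  shows "Lyap f (Kraus nbar th2 \<phi> \<rho>) = (\<Sum>n\<le>4 * nbar + 3. Tf nbar th2 f n * Re (\<rho> n n))"
proof -
  have s: "supp (4 * nbar + 3) \<rho>" using assms unfolding Inv_def by blast
  have "Lyap f (Kraus nbar th2 \<phi> \<rho>) = (\<Sum>n\<le>4 * nbar + 3. f n * Re (Kraus nbar th2 \<phi> \<rho> n n))"
    by (rule Lyap_supp[OF supp_K[OF s]])
  also have "\<dots> = Re (\<Sum>n\<le>4 * nbar + 3. complex_of_real (f n) * Kraus nbar th2 \<phi> \<rho> n n)"
    by (simp add: Re_sum)
  also have "\<dots> = Re (\<Sum>n\<le>4 * nbar + 3. complex_of_real (Tf nbar th2 f n) * \<rho> n n)"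
    unfolding diag_sum[OF s] ..
  also have "\<dots> = (\<Sum>n\<le>4 * nbar + 3. Tf nbar th2 f n * Re (\<rho> n n))"
    by (simp add: Re_sum)
  finally show ?thesis .
qed

lemma Lyap_strict:
  assumes I: "Inv (4 * nbar + 3) \<rho>" and nk: "\<rho> \<noteq> ketbra nbar"
  shows "Lyap f (Kraus nbar th2 \<phi> \<rho>) < Lyap f \<rho>"
proof -
  have s: "supp (4 * nbar + 3) \<rho>" and re: "\<And>i. 0 \<le> Re (\<rho> i i)" using I unfolding Inv_def by auto
  obtain m where m: "m \<le> 4 * nbar + 3" "m \<noteq> nbar" "Re (\<rho> m m) \<noteq> 0"
    using not_ketbra[OF I _ ] nk by force
  have mp: "0 < Re (\<rho> m m)" using m re[of m] by simp
  have "(\<Sum>n\<le>4 * nbar + 3. Tf nbar th2 f n * Re (\<rho> n n)) < (\<Sum>n\<le>4 * nbar + 3. f n * Re (\<rho> n n))"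
  proof (rule sum_strict_mono_ex1)
    show "\<forall>x\<in>{..4 * nbar + 3}. Tf nbar th2 f x * Re (\<rho> x x) \<le> f x * Re (\<rho> x x)"
      using Tfle re by (auto intro: mult_right_mono)
    show "\<exists>a\<in>{..4 * nbar + 3}. Tf nbar th2 f a * Re (\<rho> a a) < f a * Re (\<rho> a a)"
      using m mp Tflt[of m] by (intro bexI[of _ m]) auto
  qed simp
  thus ?thesis unfolding Lyap_step[OF I] Lyap_supp[OF s] .
qed

end


context
  fixes nbar :: nat and th2 \<eta> :: real and f :: "nat \<Rightarrow> real"
  assumes nb: "1 \<le> nbar" and th: "0 < th2"
    and hyp: "\<forall>n\<in>{1..4 * nbar + 3}. \<forall>k::nat. th2 \<noteq> real k * pi / sqrt (real n)"
    and e0: "0 < \<eta>" and e1: "\<eta> < 1" and isf: "is_f nbar th2 \<eta> f"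
begin

lemmas fge1' = f_ge1[OF nb th hyp e0 e1 isf]
lemmas fge0' = f_ge0[OF nb th hyp e0 e1 isf]
lemmas Tfle' = Tf_le[OF nb th hyp e0 e1 isf]
lemmas Tflt' = Tf_lt[OF nb th hyp e0 e1 isf]
lemmas fnbar' = f_nbar[OF nb th hyp e0 e1 isf]
lemmas Lyap_step' = Lyap_step[OF nb th hyp e0 e1 isf]

definition lam where "lam = Max (insert 0 ((\<lambda>n. Tf nbar th2 f n / f n) ` ({..4 * nbar + 3} - {nbar})))"

lemma lam_ge0: "0 \<le> lam" unfolding lam_def by (rule Max_ge) auto

lemma lam_lt1: "lam < 1"
  unfolding lam_def
proof (subst Max_less_iff)
  show "\<forall>a\<in>insert 0 ((\<lambda>n. Tf nbar th2 f n / f n) ` ({..4 * nbar + 3} - {nbar})). a < 1"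
  proof
    fix a assume "a \<in> insert 0 ((\<lambda>n. Tf nbar th2 f n / f n) ` ({..4 * nbar + 3} - {nbar}))"
    then consider "a = 0" | n where "n \<le> 4 * nbar + 3" "n \<noteq> nbar" "a = Tf nbar th2 f n / f n" by auto
    thus "a < 1"
    proof cases
      case 2
      have "0 < f n" using fge1'[OF 2(1,2)] by simp
      thus ?thesis using 2 Tflt'[OF 2(1,2)] by (simp add: divide_less_eq)
    qed simp
  qed
qed auto

lemma Tf_lam: "n \<le> 4 * nbar + 3 \<Longrightarrow> Tf nbar th2 f n \<le> lam * f n"
proof (cases "n = nbar")
  case True
  thus ?thesis using Tfle'[of n] fnbar' by simp
next
  case False
  assume n: "n \<le> 4 * nbar + 3"
  have fp: "0 < f n" using fge1'[OF n False] by simp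
  have "Tf nbar th2 f n / f n \<le> lam" unfolding lam_def by (rule Max_ge) (use n False in auto)
  thus ?thesis using fp by (simp add: divide_le_eq mult.commute)
qed

lemma converge:
  assumes I0: "Inv (4 * nbar + 3) \<rho>0"
  shows "(\<lambda>k. ((Kraus nbar th2 \<phi> ^^ k) \<rho>0) i j) \<longlonglongrightarrow> ketbra nbar i j"
proof -
  define D where "D = 4 * nbar + 3"
  define r where "r k = (Kraus nbar th2 \<phi> ^^ k) \<rho>0" for k
  define V where "V k = (\<Sum>n\<le>D. f n * Re (r k n n))" for k
  have Ik: "Inv D (r k)" for k unfolding r_def D_def by (rule Inv_iter[OF I0])
  have re: "0 \<le> Re (r k n n)" for k n using Ik[of k] unfolding Inv_def by blast
  have sk: "supp D (r k)" for k using Ik[of k] unfolding Inv_def by blast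
  have V0: "0 \<le> V k" for k unfolding V_def D_def using fge0' re by (intro sum_nonneg mult_nonneg_nonneg) auto
  have Vs: "V (Suc k) \<le> lam * V k" for k
  proof -
    have "V (Suc k) = Lyap f (Kraus nbar th2 \<phi> (r k))"
      unfolding V_def r_def D_def using Lyap_supp[OF supp_K[OF sk[of k, unfolded D_def]]] by (simp add: r_def)
    also have "\<dots> = (\<Sum>n\<le>D. Tf nbar th2 f n * Re (r k n n))"
      unfolding D_def by (rule Lyap_step'[OF Ik[of k, unfolded D_def]])
    also have "\<dots> \<le> (\<Sum>n\<le>D. lam * f n * Re (r k n n))"
      using Tf_lam re unfolding D_def by (intro sum_mono mult_right_mono) auto
    also have "\<dots> = lam * V k" unfolding V_def by (simp add: sum_distrib_left mult_ac)
    finally show ?thesis .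
  qed
  have Vb: "V k \<le> lam ^ k * V 0" for k
  proof (induction k)
    case (Suc k)
    have "V (Suc k) \<le> lam * V k" by (rule Vs)
    also have "\<dots> \<le> lam * (lam ^ k * V 0)" using Suc lam_ge0 by (rule mult_left_mono)
    finally show ?case by simp
  qed simp
  have Vlim: "V \<longlonglongrightarrow> 0"
  proof (rule Lim_null_comparison)
    show "\<forall>\<^sub>F k in sequentially. norm (V k) \<le> lam ^ k * V 0" using Vb V0 by simp
    have "(\<lambda>k. lam ^ k) \<longlonglongrightarrow> 0" using lam_ge0 lam_lt1 by (intro LIMSEQ_power_zero) simp
    thus "(\<lambda>k. lam ^ k * V 0) \<longlonglongrightarrow> 0" by (intro tendsto_mult_left_zero)
  qed
  have ple: "Re (r k n n) \<le> V k" if "n \<noteq> nbar" for k n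
  proof (cases "n \<le> D")
    case True
    have "Re (r k n n) \<le> f n * Re (r k n n)" using fge1'[of n] True that re[of k n] unfolding D_def
      by (simp add: mult_le_cancel_right1)
    also have "\<dots> \<le> V k" unfolding V_def
      by (rule member_le_sum[where f="\<lambda>n. f n * Re (r k n n)"]) (use True fge0' re in \<open>auto simp: D_def\<close>)
    finally show ?thesis .
  next
    case False thus ?thesis using sk[of k] V0[of k] unfolding supp_def by simp
  qed
  have plim: "(\<lambda>k. Re (r k n n)) \<longlonglongrightarrow> 0" if "n \<noteq> nbar" for n
    by (rule Lim_null_comparison[OF _ Vlim]) (use ple[OF that] re in auto)
  have p1: "Re (r k n n) \<le> 1" for k n
  proof (cases "n \<le> D")
    case True
    have "Re (r k n n) \<le> (\<Sum>m\<le>D. Re (r k m m))"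
      by (rule member_le_sum[where f="\<lambda>m. Re (r k m m)"]) (use True re in auto)
    also have "\<dots> = Re (\<Sum>m\<le>D. r k m m)" by (simp add: Re_sum)
    also have "\<dots> = 1" using Ik[of k] unfolding Inv_def by simp
    finally show ?thesis .
  next
    case False thus ?thesis using sk[of k] unfolding supp_def by simp
  qed
  have ent0: "(\<lambda>k. r k a b) \<longlonglongrightarrow> 0" if "a \<noteq> nbar \<or> b \<noteq> nbar" for a b
  proof -
    define c where "c = (if a \<noteq> nbar then a else b)"
    have cn: "c \<noteq> nbar" using that unfolding c_def by auto
    have bd: "norm (r k a b) \<le> sqrt (Re (r k c c))" for k
    proof -
      have cs: "(cmod (r k a b))\<^sup>2 \<le> Re (r k a a) * Re (r k b b)" using Ik[of k] unfolding Inv_def by blast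
      have "Re (r k a a) * Re (r k b b) \<le> Re (r k c c)"
      proof (cases "a \<noteq> nbar")
        case True
        thus ?thesis unfolding c_def using re[of k a] p1[of k b] by (simp add: mult_left_le)
      next
        case False
        thus ?thesis unfolding c_def using re[of k b] p1[of k a] using mult_right_mono[of "Re (r k a a)" 1 "Re (r k b b)"] by simp
      qed
      hence "(cmod (r k a b))\<^sup>2 \<le> Re (r k c c)" using cs by linarith
      thus ?thesis by (simp add: real_le_rsqrt)
    qed
    have "(\<lambda>k. sqrt (Re (r k c c))) \<longlonglongrightarrow> sqrt 0" by (intro tendsto_real_sqrt plim[OF cn])
    hence "(\<lambda>k. sqrt (Re (r k c c))) \<longlonglongrightarrow> 0" by simp
    thus ?thesis by (rule Lim_null_comparison[rotated]) (use bd in auto)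
  qed
  show ?thesis
  proof (cases "i = nbar \<and> j = nbar")
    case False
    hence "ketbra nbar i j = 0" unfolding ketbra_def by auto
    thus ?thesis using ent0[of i j] False unfolding r_def by auto
  next
    case True
    have nD: "nbar \<le> D" unfolding D_def by simp
    have eq: "r k nbar nbar = 1 - (\<Sum>n\<in>{..D} - {nbar}. r k n n)" for k
    proof -
      have "(\<Sum>n\<le>D. r k n n) = r k nbar nbar + (\<Sum>n\<in>{..D} - {nbar}. r k n n)"
        by (rule sum.remove) (use nD in auto)
      moreover have "(\<Sum>n\<le>D. r k n n) = 1" using Ik[of k] unfolding Inv_def by blast
      ultimately show ?thesis by (simp add: algebra_simps)
    qed
    have "(\<lambda>k. \<Sum>n\<in>{..D} - {nbar}. r k n n) \<longlonglongrightarrow> 0"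
      by (rule tendsto_null_sum) (use ent0 in auto)
    hence "(\<lambda>k. 1 - (\<Sum>n\<in>{..D} - {nbar}. r k n n)) \<longlonglongrightarrow> 1 - 0" by (intro tendsto_diff tendsto_const)
    hence "(\<lambda>k. r k nbar nbar) \<longlonglongrightarrow> 1" unfolding eq by simp
    thus ?thesis using True unfolding r_def ketbra_def by simp
  qed
qed

end

theorem theorem1:
  fixes nbar :: nat and th2 \<phi> \<eta> :: real and f :: "nat \<Rightarrow> real"
  assumes "1 \<le> nbar"
    and "0 < th2"
    and "\<forall>n\<in>{1..4 * nbar + 3}. \<forall>k::nat. th2 \<noteq> real k * pi / sqrt (real n)"
    and "0 < \<eta>" and "\<eta> < 1"
    and "is_f nbar th2 \<eta> f"
  shows "invariant_on (4 * nbar + 3) (Mg nbar th2)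
       \<and> invariant_on (4 * nbar + 3) (Me nbar th2)
       \<and> invariant_on (4 * nbar + 3) (Mm nbar th2 \<phi>)
       \<and> (\<forall>\<rho>0. density_on (4 * nbar + 3) \<rho>0 \<longrightarrow>
            (\<forall>i j. (\<lambda>k. ((Kraus nbar th2 \<phi> ^^ k) \<rho>0) i j) \<longlonglongrightarrow> ketbra nbar i j))
       \<and> (\<forall>\<rho>. density_on (4 * nbar + 3) \<rho> \<and> \<rho> \<noteq> ketbra nbar \<longrightarrow>
            Lyap f (Kraus nbar th2 \<phi> \<rho>) < Lyap f \<rho>)"
proof (intro conjI allI impI)
  show "invariant_on (4 * nbar + 3) (Mg nbar th2)"
    unfolding invariant_on_def Mg_entry
  proof (intro allI impI)
    fix i j assume ij: "j \<le> 4 * nbar + 3 \<and> 4 * nbar + 3 < i"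
    show "(if i = Suc j then complex_of_real (Gc nbar th2 j) else 0) = 0"
    proof (cases "i = Suc j")
      case True
      hence "j = 4 * nbar + 3" using ij by simp
      thus ?thesis using True Gc_D by simp
    qed simp
  qed
  show "invariant_on (4 * nbar + 3) (Me nbar th2)"
    unfolding invariant_on_def Me_entry fN_def by auto
  show "invariant_on (4 * nbar + 3) (Mm nbar th2 \<phi>)"
    unfolding invariant_on_def Mm_entry by auto
  fix \<rho>0 i j assume "density_on (4 * nbar + 3) \<rho>0"
  thus "(\<lambda>k. ((Kraus nbar th2 \<phi> ^^ k) \<rho>0) i j) \<longlonglongrightarrow> ketbra nbar i j"
    by (intro converge[OF assms] density_Inv)
next
  fix \<rho> assume "density_on (4 * nbar + 3) \<rho> \<and> \<rho> \<noteq> ketbra nbar"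
  thus "Lyap f (Kraus nbar th2 \<phi> \<rho>) < Lyap f \<rho>"
    using Lyap_strict[OF assms] density_Inv by blast
qed

end
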